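(* Consider the data sharing game with participants $N=\{1,\dots,n\}$ and a server $0$ with budget $b_0\ge 0$, in which every participant inputs its true dataset, and let $w$ be the associated characteristic function $$w(S)=\sum_{i\in S} v_i(F(D_S),D_i)+b_0 \quad (\emptyset\neq S\subseteq N),\qquad w(\emptyset)=0 .$$ Suppose that the global model trained on all data performs better than the model trained on any coalition, in the sense that for every nonempty $S\subseteq N$ and every $i\in S$, $v_i(F(D),D_i)\ge v_i(F(D_S),D_i)$. Then the core $$\mathrm{Core}(N)=\Big\{(\pi_0,\pi_1,\dots,\pi_n)\in\mathbb{R}^{n+1}_{+}\ :\ \sum_{i\in N}\pi_i+\pi_0=w(N),\ \ \sum_{i\in S}\pi_i+\pi_0\ge w(S)\ \text{for all } S\subseteq N\Big\}$$ is nonempty.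
   Context: Each participant $i\in N$ holds a dataset $D_i$; $D=\cup_{i\in N}D_i$ and, for $S\subseteq N$, $D_S=\{D_i\}_{i\in S}$. $F$ is a federated learning algorithm mapping a collection of datasets to a (global) model, $A(\cdot)$ is an accuracy metric of a model, and $h_i(\cdot)=k_iA(\cdot)$ with constant $k_i>0$. The valuation of participant $i$ (with original dataset $D_i$) for a model $M$ is $v_i(M,D_i)=\mathbb{E}\big[\max\{h_i(M)-h_i(F(D_i)),0\}\big]$, where the expectation is over the randomness of training/evaluation; in particular $v_i\ge 0$. *)

theory Defs
  imports "HOL-Probability.Probability"
begin

definition coll :: "(nat \<Rightarrow> 'd) \<Rightarrow> nat set \<Rightarrow> (nat \<Rightarrow> 'd option)" where
  "coll D S = (\<lambda>i. if i \<in> S then Some (D i) else None)"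

(* Randomness of training/evaluation is an outcome w of probability space P.
   F C w : model trained on collection C with randomness w;  A M w : accuracy of model M.
   A (random) model is a map 'w => 'm.
   v_i(M, D_i) = E[ max{ h_i(M) - h_i(F(D_i)), 0 } ] with h_i = k_i * A. *)
definition valuation ::
  "'w measure \<Rightarrow> ((nat \<Rightarrow> 'd option) \<Rightarrow> 'w \<Rightarrow> 'm) \<Rightarrow> ('m \<Rightarrow> 'w \<Rightarrow> real)
   \<Rightarrow> real \<Rightarrow> (nat \<Rightarrow> 'd) \<Rightarrow> nat \<Rightarrow> ('w \<Rightarrow> 'm) \<Rightarrow> real" where
  "valuation P F A k D i M =
     (\<integral>\<omega>. max (k * A (M \<omega>) \<omega> - k * A (F (coll D {i}) \<omega>) \<omega>) 0 \<partial>P)"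

definition char_fun ::
  "'w measure \<Rightarrow> ((nat \<Rightarrow> 'd option) \<Rightarrow> 'w \<Rightarrow> 'm) \<Rightarrow> ('m \<Rightarrow> 'w \<Rightarrow> real)
   \<Rightarrow> (nat \<Rightarrow> real) \<Rightarrow> (nat \<Rightarrow> 'd) \<Rightarrow> real \<Rightarrow> nat set \<Rightarrow> real" where
  "char_fun P F A k D b0 S =
     (if S = {} then 0
      else (\<Sum>i\<in>S. valuation P F A (k i) D i (F (coll D S))) + b0)"

definition core :: "nat \<Rightarrow> (nat set \<Rightarrow> real) \<Rightarrow> (nat \<Rightarrow> real) set" where
  "core n w = {\<pi>. (\<forall>j\<in>{0..n}. \<pi> j \<ge> 0)
                 \<and> (\<Sum>i\<in>{1..n}. \<pi> i) + \<pi> 0 = w {1..n}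
                 \<and> (\<forall>S. S \<subseteq> {1..n} \<longrightarrow> (\<Sum>i\<in>S. \<pi> i) + \<pi> 0 \<ge> w S)}"

end

theory Submission
  imports Defs
begin

theorem theorem2:
  fixes P :: "'w measure"
    and F :: "(nat \<Rightarrow> 'd option) \<Rightarrow> 'w \<Rightarrow> 'm"
    and A :: "'m \<Rightarrow> 'w \<Rightarrow> real"
    and k :: "nat \<Rightarrow> real"
    and D :: "nat \<Rightarrow> 'd"
    and b0 :: real
    and n :: nat
  assumes "prob_space P"
    and "\<forall>i\<in>{1..n}. k i > 0"
    and "b0 \<ge> 0"
    and "\<forall>S. S \<subseteq> {1..n} \<and> S \<noteq> {} \<longrightarrow>
           (\<forall>i\<in>S. valuation P F A (k i) D i (F (coll D {1..n}))
                  \<ge> valuation P F A (k i) D i (F (coll D S)))"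
  shows "core n (char_fun P F A k D b0) \<noteq> {}"
proof -
  define v where "v i = valuation P F A (k i) D i (F (coll D {1..n}))" for i
  define p where "p i = (if i = 0 then (if n = 0 then 0 else b0) else v i)" for i
  have vnn: "valuation P F A kk D i M \<ge> 0" for kk i M
    unfolding valuation_def by (rule integral_nonneg_AE) simp
  have "p \<in> core n (char_fun P F A k D b0)"
    unfolding core_def
  proof (intro CollectI conjI ballI allI impI)
    fix j assume "j \<in> {0..n}" then show "p j \<ge> 0"
      using assms(3) vnn by (simp add: p_def v_def)
  next
    show "(\<Sum>i\<in>{1..n}. p i) + p 0 = char_fun P F A k D b0 {1..n}"
      by (simp add: p_def char_fun_def v_def)
  next
    fix S assume S: "S \<subseteq> {1..n}"
    have eq: "(\<Sum>i\<in>S. p i) = (\<Sum>i\<in>S. v i)"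
      using S by (intro sum.cong) (auto simp: p_def)
    show "(\<Sum>i\<in>S. p i) + p 0 \<ge> char_fun P F A k D b0 S"
    proof (cases "S = {}")
      case True then show ?thesis using assms(3) by (simp add: char_fun_def p_def)
    next
      case False
      then have "n \<noteq> 0" using S by auto
      have "(\<Sum>i\<in>S. valuation P F A (k i) D i (F (coll D S))) \<le> (\<Sum>i\<in>S. v i)"
        using assms(4) S False by (intro sum_mono) (auto simp: v_def)
      then show ?thesis using False \<open>n \<noteq> 0\<close> eq by (simp add: char_fun_def p_def)
    qed
  qed
  then show ?thesis by blast
qed

end
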